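(* Let $\beta$ be an ordered partition of $N$ and let $\zeta\in(\mathfrak t')^*_\beta$ be $\beta$-generic with $\zeta(c)\neq0$. Then (i) the map $W\to(\mathfrak t')^*$, $w\mapsto w(\zeta)$ (affine action) is injective; (ii) the map $X^\beta\to(\mathfrak t')^*/\bar W$, $x\mapsto\bar W\cdot x(\zeta)$, is injective. (Analogously, if $\zeta\in\bar{\mathfrak t}^*_\beta$ is $\beta$-generic, then $w\mapsto w(\zeta)$ is injective on $\bar W$.)
   Context: Fix an integer $N\ge2$. Let $\bar{\mathfrak t}=\bigoplus_{i=1}^N\mathbb C\epsilon_i^\vee$, $\mathfrak t'=\bar{\mathfrak t}\oplus\mathbb Cc$, $\epsilon_1,\dots,\epsilon_N\in\bar{\mathfrak t}^*$ the dual basis, and $(\mathfrak t')^*=\bar{\mathfrak t}^*\oplus\mathbb Cc^*$ with $\epsilon_i(c)=0$, $c^*(c)=1$, $c^*(\bar{\mathfrak t})=0$. Put $(\epsilon_i,\epsilon_j)=\delta_{ij}$ and for $\zeta\in(\mathfrak t')^*$, $\bar\alpha=\sum a_i\epsilon_i$, $(\zeta,\bar\alpha)=\sum_ia_i\zeta(\epsilon_i^\vee)$. $\bar R=\{\alpha_{ij}=\epsilon_i-\epsilon_j:i\ne j\}$, $\bar R_+=\{\alpha_{ij}:i<j\}$, $\alpha_i=\alpha_{i,i+1}$, $\bar\Pi=\{\alpha_1,\dots,\alpha_{N-1}\}$. With formal $\delta$, $R=\{\bar\alpha+k\delta:\bar\alpha\in\bar R,k\in\mathbb Z\}$, $R_+=\{\bar\alpha+k\delta:\bar\alpha\in\bar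 R_+,k\ge0\}\cup\{-\bar\alpha+k\delta:\bar\alpha\in\bar R_+,k>0\}$, $R_-=R\setminus R_+$; $(\zeta,\bar\alpha+k\delta)=(\zeta,\bar\alpha)+k\zeta(c)$. $\bar P=\bigoplus\mathbb Z\epsilon_i$, $\bar P_-=\{\eta\in\bar P:(\eta,\alpha)\le0\ \forall\alpha\in\bar R_+\}$, $\bar W=\mathfrak S_N$ permuting indices, $W=\bar W\ltimes\bar P$ (elements $wt_\eta$, $wt_\eta w^{-1}=t_{w(\eta)}$), acting on $R$ by $w(\bar\alpha+k\delta)=w(\bar\alpha)+k\delta$, $t_\eta(\bar\alpha+k\delta)=\bar\alpha+(k-(\eta,\bar\alpha))\delta$, and on $(\mathfrak t')^*$ by the affine action: $w$ permutes the $\epsilon_i$ and fixes $c^*$, $t_\eta(\zeta)=\zeta+\zeta(c)\eta$. $l(w)=\#(R_+\cap w^{-1}(R_-))$. An ordered partition $\beta$ of $N$ gives blocks of consecutive indices of sizes $\beta_1,\dots,\beta_r$; $\bar R_\beta=\{\alpha_{ij}:i,j\text{ in the same block}\}$, $\bar R_{\beta,+}=\bar R_\beta\cap\bar R_+$, $\bar\Pi_\beta=\bar\Pi\cap\bar R_\beta$, $\bar W_\beta=\langle s_\alpha:\alpha\in\bar\Pi_\beta\rangle$, $W^\beta=\{w\in W:l(wu)\ge l(w)\ \forall u\in\bar W_\beta\}$, $\bar W^\beta=W^\beta\cap\bar W$. $(\mathfrak t')^*_\beta=\{\zeta\in(\mathfrak t')^*:(\zeta,\alpha)=-1\ \forall\alpha\in\bar\Pi_\beta\}$,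 $\bar{\mathfrak t}^*_\beta$ analogously in $\bar{\mathfrak t}^*$. $\zeta\in(\mathfrak t')^*_\beta$ (resp. $\bar{\mathfrak t}^*_\beta$) is $\beta$-generic if $(\zeta,\alpha)\notin\{1,0,-1\}$ for all $\alpha\in R_+\setminus\bar R_{\beta,+}$ (resp. $\bar R_+\setminus\bar R_{\beta,+}$). For $w\in\bar W^\beta$, $\eta_w\in\bar P_-$ is defined by $(\eta_w,\epsilon_1)=0$ and $(\eta_w,\alpha_i)=-1$ if $\alpha_i\in w(\bar R_+\setminus\bar R_{\beta,+})$, $0$ otherwise; $\bar P_-(w)=\{\eta+\eta_w:\eta\in\bar P_-\}$; $X^\beta=\{t_\eta w:w\in\bar W^\beta,\eta\in\bar P_-(w)\}$. *)

theory Defs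
  imports Complex_Main "HOL-Combinatorics.Combinatorics"
begin

text \<open>Indices run over {1..N}. An element zeta of (t')^* is encoded as a pair
 (a, k) with a i = zeta(eps_i^vee) for i in {1..N} (a i = 0 outside {1..N}) and k = zeta(c).
 Then (zeta, alpha_ij + n delta) = a i - a j + n k.
 An element of W = Wbar |x Pbar is encoded by the unique pair (w, eta) with the element
 equal to w t_eta, where w permutes {1..N} and eta : nat => int vanishes outside {1..N}.\<close>

definition ordered_partition :: "nat \<Rightarrow> nat list \<Rightarrow> bool" where
  "ordered_partition N \<beta> \<longleftrightarrow> (\<forall>x\<in>set \<beta>. 0 < x) \<and> sum_list \<beta> = N"

text \<open>Index of the block containing i (blocks of consecutive indices of sizes beta_1, ...).\<close>
definition blk :: "nat list \<Rightarrow> nat \<Rightarrow> nat" where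
  "blk \<beta> i = (LEAST r. i \<le> sum_list (take r \<beta>))"

definition same_block :: "nat list \<Rightarrow> nat \<Rightarrow> nat \<Rightarrow> bool" where
  "same_block \<beta> i j \<longleftrightarrow> blk \<beta> i = blk \<beta> j"

definition tdual :: "nat \<Rightarrow> ((nat \<Rightarrow> complex) \<times> complex) set" where
  "tdual N = {(a, k). \<forall>i. i \<notin> {1..N} \<longrightarrow> a i = 0}"

definition tbar :: "nat \<Rightarrow> (nat \<Rightarrow> complex) set" where
  "tbar N = {a. \<forall>i. i \<notin> {1..N} \<longrightarrow> a i = 0}"

definition Pbar :: "nat \<Rightarrow> (nat \<Rightarrow> int) set" where
  "Pbar N = {\<eta>. \<forall>i. i \<notin> {1..N} \<longrightarrow> \<eta> i = 0}"

definition Wbar :: "nat \<Rightarrow> (nat \<Rightarrow> nat) set" where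
  "Wbar N = {w. w permutes {1..N}}"

definition Wgrp :: "nat \<Rightarrow> ((nat \<Rightarrow> nat) \<times> (nat \<Rightarrow> int)) set" where
  "Wgrp N = Wbar N \<times> Pbar N"

text \<open>Affine action of w t_eta: (w t_eta)(zeta) = w(zeta + zeta(c) eta).\<close>
definition aff_act :: "(nat \<Rightarrow> nat) \<times> (nat \<Rightarrow> int) \<Rightarrow> (nat \<Rightarrow> complex) \<times> complex
    \<Rightarrow> (nat \<Rightarrow> complex) \<times> complex" where
  "aff_act x z = (let (w, \<eta>) = x; (a, k) = z in
      (\<lambda>j. a (inv w j) + k * of_int (\<eta> (inv w j)), k))"

definition perm_act :: "(nat \<Rightarrow> nat) \<Rightarrow> (nat \<Rightarrow> complex) \<Rightarrow> (nat \<Rightarrow> complex)" where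
  "perm_act w a = (\<lambda>j. a (inv w j))"

definition orbit :: "nat \<Rightarrow> (nat \<Rightarrow> complex) \<times> complex \<Rightarrow> ((nat \<Rightarrow> complex) \<times> complex) set" where
  "orbit N z = {aff_act (u, \<lambda>_. 0) z | u. u \<in> Wbar N}"

text \<open>alpha_ij + n delta is in R_+ (for i, j distinct).\<close>
definition pos_root :: "nat \<Rightarrow> nat \<Rightarrow> int \<Rightarrow> bool" where
  "pos_root i j n \<longleftrightarrow> (i < j \<and> 0 \<le> n) \<or> (j < i \<and> 0 < n)"

text \<open>Length l(w t_eta) = #(R_+ cap (w t_eta)^{-1}(R_-)), using
 (w t_eta)(alpha_ij + n delta) = alpha_{w i, w j} + (n - (eta_i - eta_j)) delta.\<close>
definition aff_len :: "nat \<Rightarrow> (nat \<Rightarrow> nat) \<times> (nat \<Rightarrow> int) \<Rightarrow> nat" where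
  "aff_len N x = (let (w, \<eta>) = x in
     card {(i, j, n). i \<in> {1..N} \<and> j \<in> {1..N} \<and> i \<noteq> j \<and> pos_root i j n
            \<and> \<not> pos_root (w i) (w j) (n - (\<eta> i - \<eta> j))})"

inductive_set Wbar_beta :: "nat \<Rightarrow> nat list \<Rightarrow> (nat \<Rightarrow> nat) set" for N \<beta> where
  id: "id \<in> Wbar_beta N \<beta>"
| step: "u \<in> Wbar_beta N \<beta> \<Longrightarrow> i \<in> {1..<N} \<Longrightarrow> same_block \<beta> i (Suc i)
          \<Longrightarrow> transpose i (Suc i) \<circ> u \<in> Wbar_beta N \<beta>"

definition Wbar_min :: "nat \<Rightarrow> nat list \<Rightarrow> (nat \<Rightarrow> nat) set" where
  "Wbar_min N \<beta> = {w \<in> Wbar N. \<forall>u \<in> Wbar_beta N \<beta>.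
        aff_len N (w \<circ> u, \<lambda>_. 0) \<ge> aff_len N (w, \<lambda>_. 0)}"

definition Pbar_minus :: "nat \<Rightarrow> (nat \<Rightarrow> int) set" where
  "Pbar_minus N = {\<eta> \<in> Pbar N. \<forall>i\<in>{1..N}. \<forall>j\<in>{1..N}. i < j \<longrightarrow> \<eta> i - \<eta> j \<le> 0}"

text \<open>alpha_m in w(Rbar_+ - Rbar_{beta,+}).\<close>
definition simple_in_image :: "nat \<Rightarrow> nat list \<Rightarrow> (nat \<Rightarrow> nat) \<Rightarrow> nat \<Rightarrow> bool" where
  "simple_in_image N \<beta> w m \<longleftrightarrow> (\<exists>i\<in>{1..N}. \<exists>j\<in>{1..N}. i < j \<and> \<not> same_block \<beta> i j
        \<and> w i = m \<and> w j = Suc m)"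

definition eta_w :: "nat \<Rightarrow> nat list \<Rightarrow> (nat \<Rightarrow> nat) \<Rightarrow> (nat \<Rightarrow> int)" where
  "eta_w N \<beta> w = (THE \<eta>. \<eta> \<in> Pbar N \<and> \<eta> 1 = 0 \<and>
      (\<forall>m\<in>{1..<N}. \<eta> m - \<eta> (Suc m) = (if simple_in_image N \<beta> w m then -1 else 0)))"

definition Pbar_minus_w :: "nat \<Rightarrow> nat list \<Rightarrow> (nat \<Rightarrow> nat) \<Rightarrow> (nat \<Rightarrow> int) set" where
  "Pbar_minus_w N \<beta> w = {\<lambda>i. \<eta> i + eta_w N \<beta> w i | \<eta>. \<eta> \<in> Pbar_minus N}"

text \<open>X^beta = {t_eta w}; since t_eta w = w t_{w^{-1}(eta)} and (w^{-1} eta)_i = eta_{w i},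
 in the (w, eta) encoding of W the element t_eta w is (w, eta o w).\<close>
definition Xbeta :: "nat \<Rightarrow> nat list \<Rightarrow> ((nat \<Rightarrow> nat) \<times> (nat \<Rightarrow> int)) set" where
  "Xbeta N \<beta> = {(w, \<eta> \<circ> w) | w \<eta>. w \<in> Wbar_min N \<beta> \<and> \<eta> \<in> Pbar_minus_w N \<beta> w}"

definition tdual_beta :: "nat \<Rightarrow> nat list \<Rightarrow> ((nat \<Rightarrow> complex) \<times> complex) set" where
  "tdual_beta N \<beta> = {(a, k) \<in> tdual N. \<forall>i\<in>{1..<N}. same_block \<beta> i (Suc i) \<longrightarrow> a i - a (Suc i) = -1}"

definition tbar_beta :: "nat \<Rightarrow> nat list \<Rightarrow> (nat \<Rightarrow> complex) set" where
  "tbar_beta N \<beta> = {a \<in> tbar N. \<forall>i\<in>{1..<N}. same_block \<beta> i (Suc i) \<longrightarrow> a i - a (Suc i) = -1}"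

text \<open>beta-generic: (zeta, alpha) not in {1,0,-1} for alpha in R_+ - Rbar_{beta,+}.\<close>
definition generic :: "nat \<Rightarrow> nat list \<Rightarrow> (nat \<Rightarrow> complex) \<times> complex \<Rightarrow> bool" where
  "generic N \<beta> z = (let (a, k) = z in
     \<forall>i\<in>{1..N}. \<forall>j\<in>{1..N}. \<forall>n::int. i \<noteq> j \<and> pos_root i j n \<and> \<not> (n = 0 \<and> same_block \<beta> i j)
        \<longrightarrow> a i - a j + of_int n * k \<notin> {1, 0, -1})"

definition generic_bar :: "nat \<Rightarrow> nat list \<Rightarrow> (nat \<Rightarrow> complex) \<Rightarrow> bool" where
  "generic_bar N \<beta> a \<longleftrightarrow>
     (\<forall>i\<in>{1..N}. \<forall>j\<in>{1..N}. i < j \<and> \<not> same_block \<beta> i j \<longrightarrow> a i - a j \<notin> {1, 0, -1})"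

end

theory Submission
  imports Defs "HOL-Library.Product_Lexorder"
begin

lemma blk_mono:
  assumes "ordered_partition N \<beta>" "i \<le> j" "j \<le> N"
  shows "blk \<beta> i \<le> blk \<beta> j"
proof -
  have ex: "j \<le> sum_list (take (length \<beta>) \<beta>)" using assms by (simp add: ordered_partition_def)
  have "j \<le> sum_list (take (blk \<beta> j) \<beta>)" unfolding blk_def by (rule LeastI[of _ "length \<beta>"]) (rule ex)
  then have "i \<le> sum_list (take (blk \<beta> j) \<beta>)" using assms by simp
  then show ?thesis unfolding blk_def by (rule Least_le)
qed

lemma same_block_mid:
  assumes "ordered_partition N \<beta>" "i \<le> m" "m \<le> j" "j \<le> N" "same_block \<beta> i j"
  shows "same_block \<beta> i m"
  using blk_mono[OF assms(1) assms(2)] blk_mono[OF assms(1) assms(3) assms(4)] assms(2-5)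
  unfolding same_block_def by simp

lemma chain_a:
  fixes a :: "nat \<Rightarrow> complex"
  assumes op: "ordered_partition N \<beta>"
    and ha: "\<forall>i\<in>{1..<N}. same_block \<beta> i (Suc i) \<longrightarrow> a i - a (Suc i) = -1"
  shows "1 \<le> i \<Longrightarrow> i + d \<le> N \<Longrightarrow> same_block \<beta> i (i + d) \<Longrightarrow> a (i + d) = a i + of_nat d"
proof (induction d)
  case 0 then show ?case by simp
next
  case (Suc d)
  have sb: "same_block \<beta> i (i + d)" using same_block_mid[OF op, of i "i+d" "i + Suc d"] Suc.prems by simp
  have sb2: "same_block \<beta> (i + d) (Suc (i + d))"
    using same_block_mid[OF op, of i "i+d" "i + Suc d"] Suc.prems by (simp add: same_block_def)
  have "a (i + d) - a (Suc (i + d)) = -1" using ha sb2 Suc.prems by auto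
  then show ?case using Suc.IH[OF Suc.prems(1) _ sb] Suc.prems by (simp add: algebra_simps)
qed

lemma chain_w:
  fixes w :: "nat \<Rightarrow> nat"
  assumes op: "ordered_partition N \<beta>"
    and hw: "\<forall>i\<in>{1..<N}. same_block \<beta> i (Suc i) \<longrightarrow> w i < w (Suc i)"
  shows "1 \<le> i \<Longrightarrow> i + Suc d \<le> N \<Longrightarrow> same_block \<beta> i (i + Suc d) \<Longrightarrow> w i < w (i + Suc d)"
proof (induction d)
  case 0 then show ?case using hw by auto
next
  case (Suc d)
  have sb: "same_block \<beta> i (i + Suc d)" using same_block_mid[OF op, of i "i+Suc d" "i + Suc (Suc d)"] Suc.prems by simp
  have sb2: "same_block \<beta> (i + Suc d) (Suc (i + Suc d))"
    using same_block_mid[OF op, of i "i+Suc d" "i + Suc (Suc d)"] Suc.prems by (simp add: same_block_def)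
  have "w (i + Suc d) < w (Suc (i + Suc d))" using hw sb2 Suc.prems by auto
  then show ?case using Suc.IH[OF Suc.prems(1) _ sb] Suc.prems by simp
qed

lemma chain_a_ne:
  fixes a :: "nat \<Rightarrow> complex"
  assumes op: "ordered_partition N \<beta>"
    and ha: "\<forall>i\<in>{1..<N}. same_block \<beta> i (Suc i) \<longrightarrow> a i - a (Suc i) = -1"
    and "i \<in> {1..N}" "j \<in> {1..N}" "i \<noteq> j" "same_block \<beta> i j"
  shows "a i \<noteq> a j"
proof -
  have *: "a i \<noteq> a j" if "i < j" "i \<in> {1..N}" "j \<in> {1..N}" "same_block \<beta> i j" for i j
  proof -
    obtain d where d: "j = i + d" "d > 0" using \<open>i < j\<close> by (metis less_imp_add_positive)
    have "a j = a i + of_nat d" using chain_a[OF op ha, of i d] that d by simp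
    then show ?thesis using d by auto
  qed
  show ?thesis
  proof (cases "i < j")
    case True then show ?thesis using * assms by blast
  next
    case False then have "j < i" using assms by simp
    then show ?thesis using *[of j i] assms by (auto simp: same_block_def)
  qed
qed

lemma gen_ne:
  fixes a :: "nat \<Rightarrow> complex"
  assumes op: "ordered_partition N \<beta>"
    and td: "(a, k) \<in> tdual_beta N \<beta>" and g: "generic N \<beta> (a, k)"
    and "i \<in> {1..N}" "j \<in> {1..N}" "i \<noteq> j"
  shows "a i - a j + of_int n * k \<noteq> 0"
proof -
  have ha: "\<forall>i\<in>{1..<N}. same_block \<beta> i (Suc i) \<longrightarrow> a i - a (Suc i) = -1"
    using td by (simp add: tdual_beta_def)
  have *: "a i - a j + of_int n * k \<noteq> 0" if "i \<in> {1..N}" "j \<in> {1..N}" "i \<noteq> j" "pos_root i j n" for i j n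
  proof (cases "n = 0 \<and> same_block \<beta> i j")
    case True then show ?thesis using chain_a_ne[OF op ha, of i j] that by auto
  next
    case False then show ?thesis using g that unfolding generic_def by auto
  qed
  show ?thesis
  proof (cases "pos_root i j n")
    case True then show ?thesis using * assms by blast
  next
    case False then have "pos_root j i (-n)" using assms unfolding pos_root_def by auto
    then have "a j - a i + of_int (-n) * k \<noteq> 0" using * assms by blast
    then show ?thesis by (simp add: algebra_simps)  
  qed
qed


lemma part1:
  fixes a :: "nat \<Rightarrow> complex"
  assumes op: "ordered_partition N \<beta>"
    and td: "(a, k) \<in> tdual_beta N \<beta>" and g: "generic N \<beta> (a, k)" and k: "k \<noteq> 0"
  shows "inj_on (\<lambda>x. aff_act x (a, k)) (Wgrp N)"
proof (rule inj_onI)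
  fix x y assume x: "x \<in> Wgrp N" and y: "y \<in> Wgrp N" and e: "aff_act x (a, k) = aff_act y (a, k)"
  obtain w \<eta> where xw: "x = (w, \<eta>)" by fastforce
  obtain w' \<eta>' where yw: "y = (w', \<eta>')" by fastforce
  have w: "w permutes {1..N}" "\<eta> \<in> Pbar N" and w': "w' permutes {1..N}" "\<eta>' \<in> Pbar N"
    using x y xw yw by (auto simp: Wgrp_def Wbar_def)
  have eq: "a (inv w j) + k * of_int (\<eta> (inv w j)) = a (inv w' j) + k * of_int (\<eta>' (inv w' j))" for j
    using e xw yw unfolding aff_act_def by (auto simp: fun_eq_iff)
  have ii: "inv w j = inv w' j" for j
  proof (cases "j \<in> {1..N}")
    case True
    have m: "inv w j \<in> {1..N}" "inv w' j \<in> {1..N}"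
      using True permutes_in_image[OF permutes_inv[OF w(1)]] permutes_in_image[OF permutes_inv[OF w'(1)]] by auto
    show ?thesis
    proof (rule ccontr)
      assume ne: "inv w j \<noteq> inv w' j"
      have "a (inv w j) - a (inv w' j) + of_int (\<eta> (inv w j) - \<eta>' (inv w' j)) * k \<noteq> 0"
        by (rule gen_ne[OF op td g m ne])
      then show False using eq[of j] by (simp add: algebra_simps)
    qed
  next
    case False then show ?thesis
      using permutes_not_in[OF permutes_inv[OF w(1)]] permutes_not_in[OF permutes_inv[OF w'(1)]] by simp
  qed
  then have "inv w = inv w'" by auto
  then have ww: "w = w'"
    by (metis inv_inv_eq permutes_bij w(1) w'(1))
  have "\<eta> i = \<eta>' i" for i
  proof (cases "i \<in> {1..N}")
    case True
    have "k * of_int (\<eta> i) = k * of_int (\<eta>' i)" using eq[of "w i"] ww permutes_inverses[OF w(1)] by simp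
    then show ?thesis using k by simp
  next
    case False then show ?thesis using w w' by (simp add: Pbar_def)
  qed
  then show "x = y" using xw yw ww by auto
qed

lemma part3:
  fixes b :: "nat \<Rightarrow> complex"
  assumes op: "ordered_partition N \<beta>" and b: "b \<in> tbar_beta N \<beta>" "generic_bar N \<beta> b"
  shows "inj_on (\<lambda>w. perm_act w b) (Wbar N)"
proof (rule inj_onI)
  fix w w' assume x: "w \<in> Wbar N" and y: "w' \<in> Wbar N" and e: "perm_act w b = perm_act w' b"
  have w: "w permutes {1..N}" and w': "w' permutes {1..N}" using x y by (auto simp: Wbar_def)
  have ha: "\<forall>i\<in>{1..<N}. same_block \<beta> i (Suc i) \<longrightarrow> b i - b (Suc i) = -1"
    using b by (simp add: tbar_beta_def)
  have ne: "b i \<noteq> b j" if "i \<in> {1..N}" "j \<in> {1..N}" "i \<noteq> j" for i j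
  proof (cases "same_block \<beta> i j")
    case True then show ?thesis using chain_a_ne[OF op ha that] by simp
  next
    case False
    show ?thesis
    proof (cases "i < j")
      case True then show ?thesis using b(2) False that unfolding generic_bar_def by force
    next
      case False': False
      then have "j < i" using that by simp
      then show ?thesis using b(2) False that unfolding generic_bar_def same_block_def by force
    qed
  qed
  have eq: "b (inv w j) = b (inv w' j)" for j using e unfolding perm_act_def by metis
  have ii: "inv w j = inv w' j" for j
  proof (cases "j \<in> {1..N}")
    case True
    have m: "inv w j \<in> {1..N}" "inv w' j \<in> {1..N}"
      using True permutes_in_image[OF permutes_inv[OF w]] permutes_in_image[OF permutes_inv[OF w']] by auto
    show ?thesis using ne[OF m] eq[of j] by blast
  next
    case False then show ?thesis
      using permutes_not_in[OF permutes_inv[OF w]] permutes_not_in[OF permutes_inv[OF w']] by simp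
  qed
  then have "inv w = inv w'" by auto
  then show "w = w'"
    by (metis inv_inv_eq permutes_bij w w')
qed

definition Inv :: "nat \<Rightarrow> (nat \<Rightarrow> nat) \<Rightarrow> (nat \<times> nat) set" where
  "Inv N w = {(i, j). i \<in> {1..N} \<and> j \<in> {1..N} \<and> i < j \<and> w j < w i}"

lemma aff_len_Inv:
  assumes "inj w"
  shows "aff_len N (w, \<lambda>_. 0) = card (Inv N w)"
proof -
  have "{(i, j, n). i \<in> {1..N} \<and> j \<in> {1..N} \<and> i \<noteq> j \<and> pos_root i j n
            \<and> \<not> pos_root (w i) (w j) (n - (0 - 0))} = (\<lambda>(i,j). (i, j, 0::int)) ` Inv N w"
  proof (rule set_eqI)
    fix t :: "nat \<times> nat \<times> int"
    obtain i j n where t: "t = (i, j, n)" by (cases t) auto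
    have "w i \<noteq> w j" if "i \<noteq> j" using assms that by (meson injD)
    then show "t \<in> {(i, j, n). i \<in> {1..N} \<and> j \<in> {1..N} \<and> i \<noteq> j \<and> pos_root i j n
            \<and> \<not> pos_root (w i) (w j) (n - (0 - 0))} \<longleftrightarrow> t \<in> (\<lambda>(i,j). (i, j, 0::int)) ` Inv N w"
      unfolding t Inv_def pos_root_def by (auto simp: image_iff)
  qed
  moreover have "inj_on (\<lambda>(i,j). (i, j, 0::int)) (Inv N w)" by (auto simp: inj_on_def)
  ultimately show ?thesis unfolding aff_len_def by (simp add: card_image)
qed

lemma Wbar_min_inc:
  assumes w: "w \<in> Wbar_min N \<beta>" and m: "m \<in> {1..<N}" "same_block \<beta> m (Suc m)"
  shows "w m < w (Suc m)"
proof (rule ccontr)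
  assume "\<not> w m < w (Suc m)"
  have wp: "w permutes {1..N}" using w by (simp add: Wbar_min_def Wbar_def)
  have "w m \<noteq> w (Suc m)" using permutes_inj[OF wp] by (meson injD n_not_Suc_n)
  with \<open>\<not> w m < w (Suc m)\<close> have gt: "w (Suc m) < w m" by simp
  define s where "s = transpose m (Suc m)"
  have u: "s \<circ> id \<in> Wbar_beta N \<beta>" unfolding s_def by (rule Wbar_beta.step[OF Wbar_beta.id m])
  have le: "aff_len N (w \<circ> (s \<circ> id), \<lambda>_. 0) \<ge> aff_len N (w, \<lambda>_. 0)" using w u by (auto simp: Wbar_min_def)
  have sp: "s permutes {1..N}" unfolding s_def using m by (intro permutes_swap_id) auto
  have injw: "inj w" using permutes_inj[OF wp] .
  have injws: "inj (w \<circ> s)" using permutes_inj[OF sp] injw by (simp add: inj_compose)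
  have fin: "finite (Inv N w)" unfolding Inv_def by (rule finite_subset[of _ "{1..N} \<times> {1..N}"]) auto
  have inm: "(m, Suc m) \<in> Inv N w" using gt m by (auto simp: Inv_def)
  have "(\<lambda>(p,q). (s p, s q)) ` Inv N (w \<circ> s) \<subseteq> Inv N w - {(m, Suc m)}"
  proof
    fix t assume "t \<in> (\<lambda>(p,q). (s p, s q)) ` Inv N (w \<circ> s)"
    then obtain p q where t: "t = (s p, s q)" and pq: "p \<in> {1..N}" "q \<in> {1..N}" "p < q" "w (s q) < w (s p)"
      by (auto simp: Inv_def)
    have "s p \<in> {1..N}" "s q \<in> {1..N}" using pq permutes_in_image[OF sp] by auto
    moreover have "s p < s q" "(s p, s q) \<noteq> (m, Suc m)"
      using pq gt unfolding s_def transpose_def by (auto split: if_splits)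
    ultimately show "t \<in> Inv N w - {(m, Suc m)}" using t pq by (auto simp: Inv_def)
  qed
  moreover have "inj_on (\<lambda>(p,q). (s p, s q)) (Inv N (w \<circ> s))"
    using permutes_inj[OF sp] by (auto simp: inj_on_def dest: injD)
  ultimately have "card (Inv N (w \<circ> s)) \<le> card (Inv N w - {(m, Suc m)})"
    using fin by (metis card_inj_on_le finite_Diff)
  also have "\<dots> < card (Inv N w)" using fin inm by (meson card_Diff1_less)
  finally show False using le aff_len_Inv[OF injw, of N] aff_len_Inv[OF injws, of N] by simp
qed


lemma eta_w_prop:
  "eta_w N \<beta> w \<in> Pbar N \<and> eta_w N \<beta> w 1 = 0 \<and>
      (\<forall>m\<in>{1..<N}. eta_w N \<beta> w m - eta_w N \<beta> w (Suc m) = (if simple_in_image N \<beta> w m then -1 else 0))"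
proof -
  let ?S = "simple_in_image N \<beta> w"
  let ?P = "\<lambda>\<eta>. \<eta> \<in> Pbar N \<and> \<eta> 1 = 0 \<and>
      (\<forall>m\<in>{1..<N}. \<eta> m - \<eta> (Suc m) = (if ?S m then -1 else 0))"
  define e where "e = (\<lambda>m. if m \<in> {1..N} then int (card {t\<in>{1..<m}. ?S t}) else 0)"
  have c: "card {t\<in>{1..<Suc m}. ?S t} = card {t\<in>{1..<m}. ?S t} + (if ?S m then 1 else 0)" if "1 \<le> m" for m
  proof -
    have "{t\<in>{1..<Suc m}. ?S t} = (if ?S m then insert m {t\<in>{1..<m}. ?S t} else {t\<in>{1..<m}. ?S t})"
      using that by (auto simp: less_Suc_eq)
    then show ?thesis by auto
  qed
  have "?P e" unfolding e_def Pbar_def using c by auto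
  moreover have "\<eta> = \<eta>'" if "?P \<eta>" "?P \<eta>'" for \<eta> \<eta>'
  proof
    fix m show "\<eta> m = \<eta>' m"
    proof (induction m)
      case 0 then show ?case using that by (simp add: Pbar_def)
    next
      case (Suc m)
      show ?case
      proof (cases "Suc m \<in> {1..N}")
        case False then show ?thesis using that by (simp add: Pbar_def)
      next
        case True
        show ?thesis
        proof (cases "m = 0")
          case True then show ?thesis using that by simp
        next
          case False
          then have "m \<in> {1..<N}" using True by auto
          then have "\<eta> m - \<eta> (Suc m) = \<eta>' m - \<eta>' (Suc m)" using that by auto
          then show ?thesis using Suc.IH by simp
        qed
      qed
    qed
  qed
  ultimately have "\<exists>!\<eta>. ?P \<eta>" by blast
  then have "?P (THE \<eta>. ?P \<eta>)" by (rule theI')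
  then show ?thesis unfolding eta_w_def .
qed

lemma eta_props:
  assumes "\<eta> \<in> Pbar_minus_w N \<beta> w"
  shows "\<eta> \<in> Pbar N" "\<And>m. m \<in> {1..<N} \<Longrightarrow> \<eta> m \<le> \<eta> (Suc m)"
    "\<And>m. m \<in> {1..<N} \<Longrightarrow> \<eta> m = \<eta> (Suc m) \<Longrightarrow> \<not> simple_in_image N \<beta> w m"
proof -
  obtain \<eta>0 where e: "\<eta> = (\<lambda>i. \<eta>0 i + eta_w N \<beta> w i)" "\<eta>0 \<in> Pbar_minus N"
    using assms by (auto simp: Pbar_minus_w_def)
  have p: "eta_w N \<beta> w \<in> Pbar N"
     "\<And>m. m\<in>{1..<N} \<Longrightarrow> eta_w N \<beta> w m - eta_w N \<beta> w (Suc m) = (if simple_in_image N \<beta> w m then -1 else 0)"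
    using eta_w_prop by blast+
  have p0: "\<eta>0 \<in> Pbar N" "\<And>m. m\<in>{1..<N} \<Longrightarrow> \<eta>0 m - \<eta>0 (Suc m) \<le> 0"
    using e(2) by (auto simp: Pbar_minus_def)
  show "\<eta> \<in> Pbar N" using p(1) p0(1) e(1) by (simp add: Pbar_def)
  fix m assume m: "m \<in> {1..<N}"
  show "\<eta> m \<le> \<eta> (Suc m)" using p(2)[OF m] p0(2)[OF m] e(1) by (auto split: if_splits)
  show "\<eta> m = \<eta> (Suc m) \<Longrightarrow> \<not> simple_in_image N \<beta> w m"
    using p(2)[OF m] p0(2)[OF m] e(1) by (auto split: if_splits)
qed

lemma Wbar_min_inc2:
  assumes op: "ordered_partition N \<beta>" and w: "w \<in> Wbar_min N \<beta>"
    and ij: "i \<in> {1..N}" "j \<in> {1..N}" "i < j" "same_block \<beta> i j"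
  shows "w i < w j"
proof -
  obtain d where d: "j = i + Suc d" using ij by (metis less_iff_Suc_add add.commute add_Suc_right)
  show ?thesis using chain_w[OF op, of w i d] Wbar_min_inc[OF w] ij d by auto
qed

definition K :: "nat list \<Rightarrow> (nat \<Rightarrow> nat) \<Rightarrow> (nat \<Rightarrow> int) \<Rightarrow> nat \<Rightarrow> int \<times> int \<times> nat" where
  "K \<beta> w \<eta> m = (\<eta> m, - int (blk \<beta> (inv w m)), inv w m)"

lemma K_step:
  assumes op: "ordered_partition N \<beta>" and w: "w \<in> Wbar_min N \<beta>" and e: "\<eta> \<in> Pbar_minus_w N \<beta> w"
    and m: "m \<in> {1..<N}"
  shows "K \<beta> w \<eta> m < K \<beta> w \<eta> (Suc m)"
proof (cases "\<eta> m = \<eta> (Suc m)")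
  case False then show ?thesis using eta_props(2)[OF e m] by (simp add: K_def)
next
  case True
  have ns: "\<not> simple_in_image N \<beta> w m" using eta_props(3)[OF e m True] .
  have wp: "w permutes {1..N}" using w by (simp add: Wbar_min_def Wbar_def)
  define i j where "i = inv w m" "j = inv w (Suc m)"
  have ij: "i \<in> {1..N}" "j \<in> {1..N}" "w i = m" "w j = Suc m"
    using m permutes_in_image[OF permutes_inv[OF wp]] permutes_inverses[OF wp] unfolding i_j_def by auto
  have ne: "i \<noteq> j" using ij by auto
  show ?thesis
  proof (cases "same_block \<beta> i j")
    case sb: True
    have "i < j"
    proof (rule ccontr)
      assume "\<not> i < j" then have "j < i" using ne by simp
      then have "w j < w i" using Wbar_min_inc2[OF op w ij(2,1)] sb by (simp add: same_block_def)
      then show False using ij by simp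
    qed
    then show ?thesis using True sb unfolding K_def i_j_def[symmetric] by (simp add: same_block_def)
  next
    case nsb: False
    then have "\<not> i < j" using ns ij unfolding simple_in_image_def by blast
    then have "j < i" using ne by simp
    then have "blk \<beta> j \<le> blk \<beta> i" using blk_mono[OF op, of j i] ij by simp
    then have "blk \<beta> j < blk \<beta> i" using nsb by (simp add: same_block_def)
    then show ?thesis using True unfolding K_def i_j_def[symmetric] by simp
  qed
qed

lemma mono_consec:
  fixes f :: "nat \<Rightarrow> 'a::order"
  assumes "\<forall>m\<in>{1..<N}. f m < f (Suc m)"
  shows "1 \<le> i \<Longrightarrow> i + Suc d \<le> N \<Longrightarrow> f i < f (i + Suc d)"
proof (induction d)
  case 0 then show ?case using assms by auto
next
  case (Suc d) then show ?case using assms[rule_format, of "i + Suc d"] by (auto intro: less_trans)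
qed

lemma mono_consec2:
  fixes f :: "nat \<Rightarrow> 'a::order"
  assumes "\<forall>m\<in>{1..<N}. f m < f (Suc m)" "i \<in> {1..N}" "j \<in> {1..N}" "i < j"
  shows "f i < f j"
proof -
  obtain d where d: "j = i + Suc d" using assms by (metis less_iff_Suc_add add.commute add_Suc_right)
  show ?thesis using mono_consec[OF assms(1), of i d] assms d by auto
qed

lemma perm_mono_id:
  fixes f :: "nat \<Rightarrow> 'a::linorder"
  assumes p: "p permutes {1..N}" and f: "\<forall>m\<in>{1..<N}. f m < f (Suc m)"
    and fp: "\<forall>m\<in>{1..<N}. f (p m) < f (p (Suc m))"
  shows "p = id"
proof -
  have pin: "p m \<in> {1..N} \<longleftrightarrow> m \<in> {1..N}" for m using permutes_in_image[OF p] .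
  have sm: "p i < p j" if "i \<in> {1..N}" "j \<in> {1..N}" "i < j" for i j
  proof -
    have "f (p i) < f (p j)" using mono_consec2[of N "f \<circ> p" i j] fp that by auto
    moreover have "\<not> p j < p i" using mono_consec2[OF f, of "p j" "p i"] pin that calculation
      by (meson order.asym)
    moreover have "p j \<noteq> p i" using calculation(1) by auto
    ultimately show ?thesis by simp
  qed
  have lo: "1 \<le> m \<longrightarrow> m \<le> N \<longrightarrow> m \<le> p m" for m
  proof (induction m)
    case 0 then show ?case by simp
  next
    case (Suc m)
    show ?case
    proof (cases "m = 0")
      case True then show ?thesis using pin[of 1] by auto
    next
      case False then show ?thesis using Suc.IH sm[of m "Suc m"] by auto
    qed
  qed
  have hi: "d < N \<longrightarrow> p (N - d) \<le> N - d" for d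
  proof (induction d)
    case 0 then show ?case using pin[of N] by auto
  next
    case (Suc d)
    show ?case
    proof
      assume "Suc d < N"
      then have "p (N - Suc d) < p (N - d)" using sm[of "N - Suc d" "N - d"] by auto
      then show "p (N - Suc d) \<le> N - Suc d" using Suc.IH \<open>Suc d < N\<close> by auto
    qed
  qed
  show ?thesis
  proof
    fix m show "p m = id m"
    proof (cases "m \<in> {1..N}")
      case True
      have "p (N - (N - m)) \<le> N - (N - m)" using hi[of "N - m"] True by auto
      then show ?thesis using lo[of m] True by auto
    next
      case False then show ?thesis using permutes_not_in[OF p] by simp
    qed
  qed
qed


lemma aff_comp:
  assumes "bij u" "bij w"
  shows "aff_act (u, \<lambda>_. 0) (aff_act (w, \<rho>) z) = aff_act (u \<circ> w, \<rho>) z"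
  using assms by (cases z) (simp add: aff_act_def o_inv_distrib)

lemma aff_id: "aff_act (id, \<lambda>_. 0) z = z"
  by (cases z) (simp add: aff_act_def)

lemma part2:
  fixes a :: "nat \<Rightarrow> complex"
  assumes op: "ordered_partition N \<beta>"
    and td: "(a, k) \<in> tdual_beta N \<beta>" and g: "generic N \<beta> (a, k)" and k: "k \<noteq> 0"
  shows "inj_on (\<lambda>x. orbit N (aff_act x (a, k))) (Xbeta N \<beta>)"
proof (rule inj_onI)
  fix x x' assume x: "x \<in> Xbeta N \<beta>" and x': "x' \<in> Xbeta N \<beta>"
    and e: "orbit N (aff_act x (a, k)) = orbit N (aff_act x' (a, k))"
  obtain w \<eta> where xd: "x = (w, \<eta> \<circ> w)" "w \<in> Wbar_min N \<beta>" "\<eta> \<in> Pbar_minus_w N \<beta> w"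
    using x by (auto simp: Xbeta_def)
  obtain w' \<eta>' where xd': "x' = (w', \<eta>' \<circ> w')" "w' \<in> Wbar_min N \<beta>" "\<eta>' \<in> Pbar_minus_w N \<beta> w'"
    using x' by (auto simp: Xbeta_def)
  have wp: "w permutes {1..N}" using xd by (simp add: Wbar_min_def Wbar_def)
  have wp': "w' permutes {1..N}" using xd' by (simp add: Wbar_min_def Wbar_def)
  have ep: "\<eta> \<in> Pbar N" using eta_props(1)[OF xd(3)] .
  have Pc: "\<eta> \<circ> w \<in> Pbar N" using ep permutes_not_in[OF wp] by (simp add: Pbar_def)
  have Pc': "\<eta>' \<circ> w' \<in> Pbar N" using eta_props(1)[OF xd'(3)] permutes_not_in[OF wp'] by (simp add: Pbar_def)
  have idW: "id \<in> Wbar N" by (simp add: Wbar_def permutes_id)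
  have "aff_act x' (a, k) \<in> orbit N (aff_act x' (a, k))"
    unfolding orbit_def by (intro CollectI exI[of _ id]) (simp add: aff_id idW)
  then have "aff_act x' (a, k) \<in> orbit N (aff_act x (a, k))" using e by simp
  then obtain u where u: "u \<in> Wbar N" "aff_act (u, \<lambda>_. 0) (aff_act x (a, k)) = aff_act x' (a, k)"
    unfolding orbit_def by auto
  have up: "u permutes {1..N}" using u by (simp add: Wbar_def)
  have "aff_act (u \<circ> w, \<eta> \<circ> w) (a, k) = aff_act x' (a, k)"
    using u(2) xd(1) aff_comp[OF permutes_bij[OF up] permutes_bij[OF wp]] by simp
  moreover have "(u \<circ> w, \<eta> \<circ> w) \<in> Wgrp N" using permutes_compose[OF wp up] Pc by (simp add: Wgrp_def Wbar_def)
  moreover have "x' \<in> Wgrp N" using xd' wp' Pc' by (simp add: Wgrp_def Wbar_def)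
  ultimately have eqx: "(u \<circ> w, \<eta> \<circ> w) = x'" using part1[OF op td g k] by (meson inj_onD)
  then have ww: "w' = u \<circ> w" and ee: "\<eta> \<circ> w = \<eta>' \<circ> w'" using xd'(1) by auto
  have e2: "\<eta>' y = \<eta> (inv u y)" for y
  proof -
    let ?i = "inv w (inv u y)"
    have "\<eta> (w ?i) = \<eta>' (w' ?i)" using fun_cong[OF ee, of ?i] by simp
    then show ?thesis using ww permutes_inverses[OF wp] permutes_inverses[OF up] by simp
  qed
  have iw': "inv w' = inv w \<circ> inv u" using ww permutes_bij[OF up] permutes_bij[OF wp] by (simp add: o_inv_distrib)
  have KK: "K \<beta> w' \<eta>' m = (K \<beta> w \<eta> \<circ> inv u) m" for m using e2 iw' by (simp add: K_def)
  have "inv u = id"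
  proof (rule perm_mono_id[OF permutes_inv[OF up]])
    show "\<forall>m\<in>{1..<N}. K \<beta> w \<eta> m < K \<beta> w \<eta> (Suc m)" using K_step[OF op xd(2,3)] by blast
    show "\<forall>m\<in>{1..<N}. K \<beta> w \<eta> (inv u m) < K \<beta> w \<eta> (inv u (Suc m))" using K_step[OF op xd'(2,3)] KK by simp
  qed
  then have "u = id" by (metis inv_id inv_inv_eq permutes_bij[OF up])
  then show "x = x'" using eqx xd(1) by simp
qed

theorem proposition2p21:
  fixes N :: nat and \<beta> :: "nat list" and a :: "nat \<Rightarrow> complex" and k :: complex
  assumes "2 \<le> N"
    and "ordered_partition N \<beta>"
    and "(a, k) \<in> tdual_beta N \<beta>"
    and "generic N \<beta> (a, k)"
    and "k \<noteq> 0"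
  shows "inj_on (\<lambda>x. aff_act x (a, k)) (Wgrp N)
       \<and> inj_on (\<lambda>x. orbit N (aff_act x (a, k))) (Xbeta N \<beta>)
       \<and> (\<forall>b. b \<in> tbar_beta N \<beta> \<and> generic_bar N \<beta> b \<longrightarrow> inj_on (\<lambda>w. perm_act w b) (Wbar N))"
  using part1[OF assms(2-5)] part2[OF assms(2-5)] part3[OF assms(2)] by blast

end
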